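(* Let $\mu\in\mathbb{R}$, $\alpha>0$, $\lambda_1,\dots,\lambda_n,\lambda^*_1,\dots,\lambda^*_n>0$. Let $X_1,\dots,X_n$ be independent with $X_i\sim\mathrm{Fr\acute{e}}(\mu,\lambda_i,\alpha)$ and $X^*_1,\dots,X^*_n$ independent with $X^*_i\sim\mathrm{Fr\acute{e}}(\mu,\lambda^*_i,\alpha)$. Let $\boldsymbol{v}=(1/\lambda_1,\dots,1/\lambda_n)$ and $\boldsymbol{v}^*=(1/\lambda^*_1,\dots,1/\lambda^*_n)$. If $\sum_{i=1}^{j}v^*_{(i)}\ge\sum_{i=1}^{j}v_{(i)}$ for all $j=1,\dots,n$, then $X_{n:n}\ge_{\rm rh}X^*_{n:n}$.
   Context: $X\sim \mathrm{Fr\acute{e}}(\mu,\lambda,\alpha)$ means distribution function $\exp\{-((x-\mu)/\lambda)^{-\alpha}\}$ for $x>\mu$. $X_{n:n}=\max_i X_i$. $v_{(1)}\le\dots\le v_{(n)}$ are the components of $\boldsymbol{v}$ in increasing order. $X\le_{\rm rh}Y$ means the reversed hazard rate $F'/F$ of $X$ is pointwise $\le$ that of $Y$. *)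

theory Defs
  imports "HOL-Probability.Probability"
begin

definition frechet_cdf :: "real \<Rightarrow> real \<Rightarrow> real \<Rightarrow> real \<Rightarrow> real" where
  "frechet_cdf mu lam alpha x =
     (if x > mu then exp (- (((x - mu) / lam) powr (- alpha))) else 0)"

definition rh_le :: "(real \<Rightarrow> real) \<Rightarrow> (real \<Rightarrow> real) \<Rightarrow> bool" where
  "rh_le F G \<longleftrightarrow> (\<forall>x. 0 < F x \<and> 0 < G x \<longrightarrow> deriv F x / F x \<le> deriv G x / G x)"

definition max_cdf :: "'a measure \<Rightarrow> (nat \<Rightarrow> 'a \<Rightarrow> real) \<Rightarrow> nat \<Rightarrow> real \<Rightarrow> real" where
  "max_cdf M X n x = measure M {\<omega> \<in> space M. Max ((\<lambda>i. X i \<omega>) ` {..<n}) \<le> x}"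

definition sorted_psum :: "(nat \<Rightarrow> real) \<Rightarrow> nat \<Rightarrow> nat \<Rightarrow> real" where
  "sorted_psum v n j = sum_list (take j (sort (map v [0..<n])))"

end

theory Submission
  imports Defs
begin

lemma tang:
  fixes a b alpha :: real
  assumes "a > 0" "b > 0" "alpha > 0"
  shows "a powr (-alpha) - b powr (-alpha) \<ge> (-alpha * b powr (-alpha-1)) * (a - b)"
proof -
  have d1: "\<And>x. x \<in> {0<..} \<Longrightarrow> ((\<lambda>x. x powr (-alpha)) has_real_derivative (-alpha * x powr (-alpha-1))) (at x)"
    by (auto intro!: derivative_eq_intros)
  have d2: "\<And>x. x \<in> {0<..} \<Longrightarrow> ((\<lambda>x. -alpha * x powr (-alpha-1)) has_real_derivative (-alpha * ((-alpha-1) * x powr (-alpha-1-1)))) (at x)"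
    by (auto intro!: derivative_eq_intros)
  have h: "0 \<le> -alpha * ((-alpha-1) * x powr (-alpha-1-1))" if "x \<in> {0<..}" for x :: real
  proof -
    have p: "x powr (-alpha-1-1) \<ge> 0" by simp
    have "(- alpha - 1) * x powr (-alpha-1-1) \<le> 0"
      using p assms by (intro mult_nonpos_nonneg) auto
    then show ?thesis using assms by (simp add: mult_nonneg_nonpos)
  qed
  have cv: "convex_on {0<..} (\<lambda>x::real. x powr (-alpha))"
    by (rule f''_ge0_imp_convex[OF _ d1 d2 h]) auto
  show ?thesis
    apply (rule convex_on_imp_above_tangent[OF cv])
    using assms d1[of b] by (auto simp: interior_open intro: has_field_derivative_at_within)
qed

lemma abel:
  fixes c d :: "nat \<Rightarrow> real"
  assumes "\<And>i j. i \<le> j \<Longrightarrow> c i \<le> c j" "\<And>j. j \<le> m \<Longrightarrow> (\<Sum>i<j. d i) \<ge> 0"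
  shows "(\<Sum>i<m. c i * d i) \<le> c (m - 1) * (\<Sum>i<m. d i)"
  using assms(2)
proof (induction m)
  case 0 then show ?case by simp
next
  case (Suc m)
  have IH: "(\<Sum>i<m. c i * d i) \<le> c (m - 1) * (\<Sum>i<m. d i)" using Suc by auto
  have "c (m-1) * (\<Sum>i<m. d i) \<le> c m * (\<Sum>i<m. d i)"
    by (rule mult_right_mono) (use Suc.prems assms(1) in auto)
  then show ?case using IH by (simp add: algebra_simps)
qed
definition GG :: "real \<Rightarrow> real \<Rightarrow> real \<Rightarrow> real \<Rightarrow> real" where
  "GG mu alpha S x = (if x > mu then exp (- ((x - mu) powr (- alpha) * S)) else 0)"

lemma GG_deriv:
  assumes "x > mu"
  shows "deriv (GG mu alpha S) x = GG mu alpha S x * (S * alpha * (x - mu) powr (- alpha - 1))"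
proof -
  have d: "((\<lambda>y. exp (- ((y - mu) powr (- alpha) * S))) has_real_derivative
      exp (- ((x - mu) powr (- alpha) * S)) * (S * alpha * (x - mu) powr (- alpha - 1))) (at x)"
    using assms by (auto intro!: derivative_eq_intros simp: algebra_simps)
  have "(GG mu alpha S has_real_derivative
      exp (- ((x - mu) powr (- alpha) * S)) * (S * alpha * (x - mu) powr (- alpha - 1))) (at x)"
    apply (rule has_field_derivative_transform_within_open[OF d, of "{mu<..}"])
    using assms by (auto simp: GG_def)
  then show ?thesis using assms by (simp add: DERIV_imp_deriv GG_def)
qed

lemma GG_rh:
  assumes "alpha > 0" "S' \<le> S"
  shows "rh_le (GG mu alpha S') (GG mu alpha S)"
  unfolding rh_le_def
proof (intro allI impI)
  fix x assume h: "0 < GG mu alpha S' x \<and> 0 < GG mu alpha S x"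
  then have x: "x > mu" by (auto simp: GG_def split: if_splits)
  have k: "alpha * (x - mu) powr (- alpha - 1) \<ge> 0" using assms x by simp
  have "S' * (alpha * (x - mu) powr (- alpha - 1)) \<le> S * (alpha * (x - mu) powr (- alpha - 1))"
    by (rule mult_right_mono[OF assms(2) k])
  then show "deriv (GG mu alpha S') x / GG mu alpha S' x \<le> deriv (GG mu alpha S) x / GG mu alpha S x"
    using h x by (simp add: GG_deriv mult.assoc)
qed

lemma frechet_prod:
  fixes n :: nat and lam :: "nat \<Rightarrow> real"
  assumes "\<forall>i<n. lam i > 0" "n \<ge> 1"
  shows "(\<Prod>i<n. frechet_cdf mu (lam i) alpha x) = GG mu alpha (\<Sum>i<n. lam i powr alpha) x"
proof (cases "x > mu")
  case True
  have e: "((x - mu) / lam i) powr (- alpha) = (x - mu) powr (- alpha) * lam i powr alpha" if "i < n" for i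
  proof -
    have "((x - mu) / lam i) powr (- alpha) = (x - mu) powr (- alpha) / lam i powr (- alpha)"
      using True assms that by (intro powr_divide)
    also have "\<dots> = (x - mu) powr (- alpha) * lam i powr alpha"
      by (simp add: powr_minus divide_inverse)
    finally show ?thesis .
  qed
  have "(\<Prod>i<n. frechet_cdf mu (lam i) alpha x) = (\<Prod>i<n. exp (- ((x - mu) powr (- alpha) * lam i powr alpha)))"
    using True e by (auto simp: frechet_cdf_def intro!: prod.cong)
  also have "\<dots> = exp (\<Sum>i<n. - ((x - mu) powr (- alpha) * lam i powr alpha))"
    by (rule exp_sum[symmetric, OF finite_lessThan])
  also have "\<dots> = GG mu alpha (\<Sum>i<n. lam i powr alpha) x"
    using True by (simp add: GG_def sum_distrib_left sum_negf)
  finally show ?thesis .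
next
  case False
  then have "frechet_cdf mu (lam 0) alpha x = 0" by (simp add: frechet_cdf_def)
  then have "(\<Prod>i<n. frechet_cdf mu (lam i) alpha x) = 0"
    using assms by (intro prod_zero) (auto intro!: bexI[of _ 0])
  then show ?thesis using False by (simp add: GG_def)
qed
lemma max_cdf_prod:
  fixes M :: "'a measure" and X :: "nat \<Rightarrow> 'a \<Rightarrow> real" and n :: nat
  assumes "prob_space M" "n \<ge> 1" "prob_space.indep_vars M (\<lambda>_. borel) X {..<n}"
  shows "max_cdf M X n x = (\<Prod>i<n. measure M {\<omega> \<in> space M. X i \<omega> \<le> x})"
proof -
  interpret prob_space M by fact
  have z: "0 \<in> {..<n}" using assms(2) by simp
  then have ne: "{..<n} \<noteq> {}" by blast
  have set: "{\<omega> \<in> space M. Max ((\<lambda>i. X i \<omega>) ` {..<n}) \<le> x} = (\<Inter>i\<in>{..<n}. X i -` {..x} \<inter> space M)"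
    using ne by (auto simp: Max_le_iff)
  have mem: "\<And>i. X i -` {..x} \<inter> space M \<in> {X i -` A \<inter> space M | A. A \<in> sets (borel :: real measure)}"
    by (intro CollectI exI[of _ "{..x}"]) simp
  have ind: "indep_sets (\<lambda>i. { X i -` A \<inter> space M | A. A \<in> sets borel}) {..<n}"
    using assms(3) unfolding indep_vars_def2 by auto
  have "prob (\<Inter>i\<in>{..<n}. X i -` {..x} \<inter> space M) = (\<Prod>i<n. prob (X i -` {..x} \<inter> space M))"
    by (rule indep_setsD[OF ind]) (use ne mem in auto)
  moreover have "\<And>i. X i -` {..x} \<inter> space M = {\<omega> \<in> space M. X i \<omega> \<le> x}" by auto
  ultimately show ?thesis unfolding max_cdf_def set by simp
qed

lemma psum_eq:
  assumes "j \<le> length ys"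
  shows "sum_list (take j ys) = (\<Sum>i<j. ys ! i)"
  using assms by (simp add: sum_list_sum_nth atLeast0LessThan min_def)

lemma sum_sort_map:
  fixes f :: "real \<Rightarrow> real"
  shows "(\<Sum>i<n. f (sort (map v [0..<n]) ! i)) = (\<Sum>i<n. f (v i))"
proof -
  have "(\<Sum>i<n. f (sort (map v [0..<n]) ! i)) = sum_list (map f (sort (map v [0..<n])))"
    by (simp add: sum_list_sum_nth atLeast0LessThan)
  also have "\<dots> = sum_list (map f (map v [0..<n]))"
    by (metis mset_map mset_sort sum_mset_sum_list)
  also have "\<dots> = (\<Sum>i<n. f (v i))"
    by (simp add: sum_list_sum_nth atLeast0LessThan)
  finally show ?thesis .
qed
lemma major:
  fixes a b :: "nat \<Rightarrow> real"
  assumes al: "alpha > 0" and ap: "\<forall>i<n. a i > 0" and bp: "\<forall>i<n. b i > 0"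
    and bm: "\<forall>i j. i \<le> j \<longrightarrow> j < n \<longrightarrow> b i \<le> b j"
    and ps: "\<forall>j\<le>n. (\<Sum>i<j. a i) \<le> (\<Sum>i<j. b i)" and n: "n \<ge> 1"
  shows "(\<Sum>i<n. b i powr (-alpha)) \<le> (\<Sum>i<n. a i powr (-alpha))"
proof -
  define c where "c i = -alpha * b (min i (n-1)) powr (-alpha-1)" for i
  define d where "d i = b i - a i" for i
  have cm: "c i \<le> c j" if "i \<le> j" for i j
  proof -
    have "b (min i (n-1)) \<le> b (min j (n-1))" using bm that n by auto
    moreover have "b (min i (n-1)) > 0" using bp n by auto
    ultimately have "b (min j (n-1)) powr (-alpha-1) \<le> b (min i (n-1)) powr (-alpha-1)"
      using al by (intro powr_mono2') auto
    then show ?thesis unfolding c_def using al by simp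
  qed
  have D: "(\<Sum>i<j. d i) \<ge> 0" if "j \<le> n" for j
    using ps that by (simp add: d_def sum_subtractf)
  have "(\<Sum>i<n. b i powr (-alpha)) - (\<Sum>i<n. a i powr (-alpha)) = (\<Sum>i<n. b i powr (-alpha) - a i powr (-alpha))"
    by (simp add: sum_subtractf)
  also have "\<dots> \<le> (\<Sum>i<n. c i * d i)"
  proof (rule sum_mono)
    fix i assume i: "i \<in> {..<n}"
    have "b i powr (-alpha) - a i powr (-alpha) \<le> (-alpha * b i powr (-alpha-1)) * (b i - a i)"
      using tang[of "a i" "b i" alpha] ap bp al i by (simp add: algebra_simps)
    then show "b i powr (-alpha) - a i powr (-alpha) \<le> c i * d i"
    proof -
      have "min i (n-1) = i" using i by auto
      then show ?thesis using \<open>b i powr (-alpha) - a i powr (-alpha) \<le> _\<close> by (simp add: c_def d_def)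
    qed
  qed
  also have "\<dots> \<le> c (n - 1) * (\<Sum>i<n. d i)"
    by (rule abel) (use cm D in auto)
  also have "\<dots> \<le> 0"
  proof (rule mult_nonpos_nonneg)
    show "c (n-1) \<le> 0" unfolding c_def using al by simp
    show "0 \<le> (\<Sum>i<n. d i)" using D by simp
  qed
  finally show ?thesis by simp
qed

theorem mainTheorem9:
  fixes M :: "'a measure" and M' :: "'b measure"
    and X :: "nat \<Rightarrow> 'a \<Rightarrow> real" and Xs :: "nat \<Rightarrow> 'b \<Rightarrow> real"
    and n :: nat and mu alpha :: real and lam lams :: "nat \<Rightarrow> real"
  assumes "prob_space M" and "prob_space M'"
    and "n \<ge> 1" and "alpha > 0"
    and "\<forall>i<n. lam i > 0" and "\<forall>i<n. lams i > 0"
    and "prob_space.indep_vars M (\<lambda>_. borel) X {..<n}"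
    and "prob_space.indep_vars M' (\<lambda>_. borel) Xs {..<n}"
    and "\<forall>i<n. \<forall>x. measure M {\<omega> \<in> space M. X i \<omega> \<le> x} = frechet_cdf mu (lam i) alpha x"
    and "\<forall>i<n. \<forall>x. measure M' {\<omega> \<in> space M'. Xs i \<omega> \<le> x} = frechet_cdf mu (lams i) alpha x"
    and "\<forall>j\<in>{1..n}. sorted_psum (\<lambda>i. 1 / lams i) n j \<ge> sorted_psum (\<lambda>i. 1 / lam i) n j"
  shows "rh_le (max_cdf M' Xs n) (max_cdf M X n)"
proof -
  have F1: "max_cdf M X n = GG mu alpha (\<Sum>i<n. lam i powr alpha)"
  proof
    fix x
    have "max_cdf M X n x = (\<Prod>i<n. measure M {\<omega> \<in> space M. X i \<omega> \<le> x})"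
      by (rule max_cdf_prod) (use assms in auto)
    also have "\<dots> = (\<Prod>i<n. frechet_cdf mu (lam i) alpha x)"
      using assms(9) by (intro prod.cong) auto
    also have "\<dots> = GG mu alpha (\<Sum>i<n. lam i powr alpha) x"
      by (rule frechet_prod) (use assms in auto)
    finally show "max_cdf M X n x = GG mu alpha (\<Sum>i<n. lam i powr alpha) x" .
  qed
  have F2: "max_cdf M' Xs n = GG mu alpha (\<Sum>i<n. lams i powr alpha)"
  proof
    fix x
    have "max_cdf M' Xs n x = (\<Prod>i<n. measure M' {\<omega> \<in> space M'. Xs i \<omega> \<le> x})"
      by (rule max_cdf_prod) (use assms in auto)
    also have "\<dots> = (\<Prod>i<n. frechet_cdf mu (lams i) alpha x)"
      using assms(10) by (intro prod.cong) auto
    also have "\<dots> = GG mu alpha (\<Sum>i<n. lams i powr alpha) x"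
      by (rule frechet_prod) (use assms in auto)
    finally show "max_cdf M' Xs n x = GG mu alpha (\<Sum>i<n. lams i powr alpha) x" .
  qed
  define xa where "xa = sort (map (\<lambda>i. 1 / lam i) [0..<n])"
  define xb where "xb = sort (map (\<lambda>i. 1 / lams i) [0..<n])"
  have la: "length xa = n" "length xb = n" by (auto simp: xa_def xb_def)
  have inv: "(1 / l) powr (- alpha) = l powr alpha" if "l > 0" for l :: real
    using that by (simp add: powr_minus_divide powr_divide)
  have SA: "(\<Sum>i<n. (xa ! i) powr (-alpha)) = (\<Sum>i<n. lam i powr alpha)"
    unfolding xa_def using sum_sort_map[where f="\<lambda>t. t powr (-alpha)" and n=n and v="\<lambda>i. 1 / lam i"] assms(5) inv
    by simp
  have SB: "(\<Sum>i<n. (xb ! i) powr (-alpha)) = (\<Sum>i<n. lams i powr alpha)"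
    unfolding xb_def using sum_sort_map[where f="\<lambda>t. t powr (-alpha)" and n=n and v="\<lambda>i. 1 / lams i"] assms(6) inv
    by simp
  have pa: "\<forall>i<n. xa ! i > 0"
  proof (intro allI impI)
    fix i assume "i < n"
    then have "xa ! i \<in> set xa" using la by auto
    then show "xa ! i > 0" using assms(5) by (auto simp: xa_def)
  qed
  have pb: "\<forall>i<n. xb ! i > 0"
  proof (intro allI impI)
    fix i assume "i < n"
    then have "xb ! i \<in> set xb" using la by auto
    then show "xb ! i > 0" using assms(6) by (auto simp: xb_def)
  qed
  have mb: "\<forall>i j. i \<le> j \<longrightarrow> j < n \<longrightarrow> xb ! i \<le> xb ! j"
    using la by (auto simp: xb_def intro!: sorted_nth_mono)
  have ps: "\<forall>j\<le>n. (\<Sum>i<j. xa ! i) \<le> (\<Sum>i<j. xb ! i)"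
  proof (intro allI impI)
    fix j assume j: "j \<le> n"
    show "(\<Sum>i<j. xa ! i) \<le> (\<Sum>i<j. xb ! i)"
    proof (cases "j = 0")
      case False
      then have "j \<in> {1..n}" using j by auto
      then have "sorted_psum (\<lambda>i. 1 / lams i) n j \<ge> sorted_psum (\<lambda>i. 1 / lam i) n j"
        using assms(11) by auto
      then show ?thesis using j la
        unfolding sorted_psum_def xa_def[symmetric] xb_def[symmetric] by (simp add: psum_eq)
    qed simp
  qed
  have "(\<Sum>i<n. lams i powr alpha) \<le> (\<Sum>i<n. lam i powr alpha)"
    using major[OF assms(4) pa pb mb ps assms(3)] SA SB by simp
  then show ?thesis unfolding F1 F2 by (rule GG_rh[OF assms(4)])
qed

end
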